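(* Let $\{\mathcal{C}_1,\mathcal{C}_2,\mathcal{C}_3\}$ be an unextendible set of three pairwise disjoint maximal commuting classes of two-qubit Pauli operators ($d=4$). Then the nine operators in $\mathcal{C}_1\cup\mathcal{C}_2\cup\mathcal{C}_3$ can be partitioned into a different set of three maximal commuting classes $\{\mathcal{C}_1',\mathcal{C}_2',\mathcal{C}_3'\}$ such that each $\mathcal{C}_i'$ contains exactly one operator from each of $\mathcal{C}_1$, $\mathcal{C}_2$, and $\mathcal{C}_3$.
   Context: Two-qubit Pauli operators are the tensor products $P_1\otimes P_2$ with $P_k\in\{I,X,Y,Z\}$; products are taken up to a phase. A maximal commuting class in $d=4$ is a set of $3$ mutually commuting non-identity two-qubit Pauli operators. A set of pairwise disjoint maximal commuting classes $\{\mathcal{C}_1,\dots,\mathcal{C}_L\}$ is unextendible if no further maximal commuting class can be formed from the non-identity Pauli operators not in $\mathcal{C}_1\cup\dots\cup\mathcal{C}_L$. *)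

theory Defs
  imports Main
begin

text \<open>Single-qubit Pauli operators (up to phase).\<close>
datatype pauli = PI | PX | PY | PZ

text \<open>Two-qubit Pauli operators P1 (x) P2, up to phase.\<close>
type_synonym pauli2 = "pauli \<times> pauli"

definition identity2 :: pauli2 where
  "identity2 = (PI, PI)"

definition anticommute1 :: "pauli \<Rightarrow> pauli \<Rightarrow> bool" where
  "anticommute1 p q \<longleftrightarrow> p \<noteq> PI \<and> q \<noteq> PI \<and> p \<noteq> q"

text \<open>Tensor products commute iff the number of anticommuting tensor factors is even.\<close>
definition commute2 :: "pauli2 \<Rightarrow> pauli2 \<Rightarrow> bool" where
  "commute2 P Q \<longleftrightarrow> (anticommute1 (fst P) (fst Q) = anticommute1 (snd P) (snd Q))"

definition max_comm_class :: "pauli2 set \<Rightarrow> bool" where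
  "max_comm_class C \<longleftrightarrow> card C = 3 \<and> identity2 \<notin> C \<and>
     (\<forall>P\<in>C. \<forall>Q\<in>C. commute2 P Q)"

definition unextendible :: "pauli2 set set \<Rightarrow> bool" where
  "unextendible S \<longleftrightarrow>
     (\<forall>C\<in>S. max_comm_class C) \<and>
     (\<forall>C\<in>S. \<forall>D\<in>S. C \<noteq> D \<longrightarrow> C \<inter> D = {}) \<and>
     \<not> (\<exists>C. max_comm_class C \<and> C \<subseteq> UNIV - {identity2} - \<Union>S)"

end

theory Submission
  imports Defs
begin

definition l0 :: "pauli2 set" where "l0 = {(PI,PX), (PX,PI), (PX,PX)}"
definition l1 :: "pauli2 set" where "l1 = {(PI,PX), (PY,PI), (PY,PX)}"
definition l2 :: "pauli2 set" where "l2 = {(PI,PX), (PZ,PI), (PZ,PX)}"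
definition l3 :: "pauli2 set" where "l3 = {(PI,PY), (PX,PI), (PX,PY)}"
definition l4 :: "pauli2 set" where "l4 = {(PI,PY), (PY,PI), (PY,PY)}"
definition l5 :: "pauli2 set" where "l5 = {(PI,PY), (PZ,PI), (PZ,PY)}"
definition l6 :: "pauli2 set" where "l6 = {(PI,PZ), (PX,PI), (PX,PZ)}"
definition l7 :: "pauli2 set" where "l7 = {(PI,PZ), (PY,PI), (PY,PZ)}"
definition l8 :: "pauli2 set" where "l8 = {(PI,PZ), (PZ,PI), (PZ,PZ)}"
definition l9 :: "pauli2 set" where "l9 = {(PX,PX), (PY,PY), (PZ,PZ)}"
definition l10 :: "pauli2 set" where "l10 = {(PX,PX), (PY,PZ), (PZ,PY)}"
definition l11 :: "pauli2 set" where "l11 = {(PX,PY), (PY,PX), (PZ,PZ)}"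
definition l12 :: "pauli2 set" where "l12 = {(PX,PY), (PY,PZ), (PZ,PX)}"
definition l13 :: "pauli2 set" where "l13 = {(PX,PZ), (PY,PX), (PZ,PY)}"
definition l14 :: "pauli2 set" where "l14 = {(PX,PZ), (PY,PY), (PZ,PX)}"
definition L :: "pauli2 set list" where "L = [l0, l1, l2, l3, l4, l5, l6, l7, l8, l9, l10, l11, l12, l13, l14]"
lemmas Ldefs = L_def l0_def l1_def l2_def l3_def l4_def l5_def l6_def l7_def l8_def l9_def l10_def l11_def l12_def l13_def l14_def
definition hyp where "hyp c1 c2 c3 \<longleftrightarrow> c1 \<inter> c2 = {} \<and> c1 \<inter> c3 = {} \<and> c2 \<inter> c3 = {} \<and> (\<forall>l\<in>set L. l \<inter> (c1 \<union> c2 \<union> c3) \<noteq> {})"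
definition concl where "concl c1 c2 c3 d1 d2 d3 \<longleftrightarrow> d1 \<inter> d2 = {} \<and> d1 \<inter> d3 = {} \<and> d2 \<inter> d3 = {} \<and>
           d1 \<union> d2 \<union> d3 = c1 \<union> c2 \<union> c3 \<and>
           {d1, d2, d3} \<noteq> {c1, c2, c3} \<and>
           (\<forall>D\<in>{d1, d2, d3}. \<forall>C\<in>{c1, c2, c3}. card (D \<inter> C) = 1)"
definition wit where "wit c1 c2 c3 = filter (\<lambda>l. l \<subseteq> c1 \<union> c2 \<union> c3 \<and> l \<noteq> c1 \<and> l \<noteq> c2 \<and> l \<noteq> c3) L"
definition ok where "ok c1 c2 c3 \<longleftrightarrow> (hyp c1 c2 c3 \<longrightarrow> (case wit c1 c2 c3 of [d1,d2,d3] \<Rightarrow> concl c1 c2 c3 d1 d2 d3 | _ \<Rightarrow> False))"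
definition Q where "Q c1 = list_all (\<lambda>c2. c1 \<inter> c2 = {} \<longrightarrow> list_all (ok c1 c2) L) L"

definition P2 :: "pauli2 list" where "P2 = [(a,b). a <- [PI,PX,PY,PZ], b <- [PI,PX,PY,PZ]]"
lemma P2_UNIV: "x \<in> set P2"
  by (cases x; rename_tac a b; case_tac a; case_tac b; simp add: P2_def)

lemma trip_chk: "list_all (\<lambda>a. list_all (\<lambda>b. (a \<noteq> b \<and> a \<noteq> (PI,PI) \<and> b \<noteq> (PI,PI) \<and> commute2 a b) \<longrightarrow> list_all (\<lambda>c.
   (a \<noteq> b \<and> a \<noteq> c \<and> b \<noteq> c \<and> a \<noteq> (PI,PI) \<and> b \<noteq> (PI,PI) \<and> c \<noteq> (PI,PI) \<and>
    commute2 a b \<and> commute2 a c \<and> commute2 b c) \<longrightarrow> {a,b,c} \<in> set L) P2) P2) P2"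
  unfolding P2_def Ldefs commute2_def anticommute1_def by code_simp

lemma mcc_L: assumes "max_comm_class C" shows "C \<in> set L"
proof -
  from assms have "card C = 3" "identity2 \<notin> C" "\<forall>P\<in>C. \<forall>Q\<in>C. commute2 P Q"
    unfolding max_comm_class_def by auto
  then obtain a b c where C: "C = {a,b,c}" "a \<noteq> b" "a \<noteq> c" "b \<noteq> c"
    using card_3_iff[of C] by metis
  have "list_all (\<lambda>c. (a \<noteq> b \<and> a \<noteq> c \<and> b \<noteq> c \<and> a \<noteq> (PI,PI) \<and> b \<noteq> (PI,PI) \<and> c \<noteq> (PI,PI) \<and>
    commute2 a b \<and> commute2 a c \<and> commute2 b c) \<longrightarrow> {a,b,c} \<in> set L) P2"
  proof -
    have "a \<in> set P2" "b \<in> set P2" by (rule P2_UNIV)+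
    then show ?thesis using trip_chk unfolding list_all_iff by blast
  qed
  moreover have "c \<in> set P2" by (rule P2_UNIV)
  ultimately show ?thesis using C \<open>identity2 \<notin> C\<close> \<open>\<forall>P\<in>C. \<forall>Q\<in>C. commute2 P Q\<close>
    unfolding list_all_iff identity2_def by auto
qed

lemma L_mcc: "list_all max_comm_class L"
  unfolding Ldefs max_comm_class_def identity2_def commute2_def anticommute1_def by code_simp
lemma c0: "Q l0"
  unfolding Q_def ok_def hyp_def concl_def wit_def Ldefs by code_simp
lemma c1: "Q l1"
  unfolding Q_def ok_def hyp_def concl_def wit_def Ldefs by code_simp
lemma c2: "Q l2"
  unfolding Q_def ok_def hyp_def concl_def wit_def Ldefs by code_simp
lemma c3: "Q l3"
  unfolding Q_def ok_def hyp_def concl_def wit_def Ldefs by code_simp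
lemma c4: "Q l4"
  unfolding Q_def ok_def hyp_def concl_def wit_def Ldefs by code_simp
lemma c5: "Q l5"
  unfolding Q_def ok_def hyp_def concl_def wit_def Ldefs by code_simp
lemma c6: "Q l6"
  unfolding Q_def ok_def hyp_def concl_def wit_def Ldefs by code_simp
lemma c7: "Q l7"
  unfolding Q_def ok_def hyp_def concl_def wit_def Ldefs by code_simp
lemma c8: "Q l8"
  unfolding Q_def ok_def hyp_def concl_def wit_def Ldefs by code_simp
lemma c9: "Q l9"
  unfolding Q_def ok_def hyp_def concl_def wit_def Ldefs by code_simp
lemma c10: "Q l10"
  unfolding Q_def ok_def hyp_def concl_def wit_def Ldefs by code_simp
lemma c11: "Q l11"
  unfolding Q_def ok_def hyp_def concl_def wit_def Ldefs by code_simp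
lemma c12: "Q l12"
  unfolding Q_def ok_def hyp_def concl_def wit_def Ldefs by code_simp
lemma c13: "Q l13"
  unfolding Q_def ok_def hyp_def concl_def wit_def Ldefs by code_simp
lemma c14: "Q l14"
  unfolding Q_def ok_def hyp_def concl_def wit_def Ldefs by code_simp
lemma call: "list_all Q L"
  unfolding L_def by (simp only: list_all_Nil_iff list_all_Cons_iff simp_thms c0 c1 c2 c3 c4 c5 c6 c7 c8 c9 c10 c11 c12 c13 c14)

theorem theorem5:
  fixes C1 C2 C3 :: "pauli2 set"
  assumes "max_comm_class C1" and "max_comm_class C2" and "max_comm_class C3"
    and "C1 \<inter> C2 = {}" and "C1 \<inter> C3 = {}" and "C2 \<inter> C3 = {}"
    and "unextendible {C1, C2, C3}"
  shows "\<exists>D1 D2 D3. max_comm_class D1 \<and> max_comm_class D2 \<and> max_comm_class D3 \<and>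
           D1 \<inter> D2 = {} \<and> D1 \<inter> D3 = {} \<and> D2 \<inter> D3 = {} \<and>
           D1 \<union> D2 \<union> D3 = C1 \<union> C2 \<union> C3 \<and>
           {D1, D2, D3} \<noteq> {C1, C2, C3} \<and>
           (\<forall>D\<in>{D1, D2, D3}. \<forall>C\<in>{C1, C2, C3}. card (D \<inter> C) = 1)"
proof -
  have m: "C1 \<in> set L" "C2 \<in> set L" "C3 \<in> set L" using assms(1-3) by (auto intro: mcc_L)
  have ne: "\<forall>l\<in>set L. l \<inter> (C1 \<union> C2 \<union> C3) \<noteq> {}"
  proof (intro ballI notI)
    fix l assume l: "l \<in> set L" and e: "l \<inter> (C1 \<union> C2 \<union> C3) = {}"
    have ml: "max_comm_class l" using L_mcc l by (simp add: list_all_iff)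
    then have "identity2 \<notin> l" by (simp add: max_comm_class_def)
    then have "l \<subseteq> UNIV - {identity2} - \<Union>{C1, C2, C3}" using e by auto
    then have ex: "\<exists>C. max_comm_class C \<and> C \<subseteq> UNIV - {identity2} - \<Union>{C1, C2, C3}" using ml by blast
    have "\<not> (\<exists>C. max_comm_class C \<and> C \<subseteq> UNIV - {identity2} - \<Union>{C1, C2, C3})"
      using assms(7) unfolding unextendible_def by (rule conjunct2[THEN conjunct2])
    then show False using ex by (rule notE)
  qed
  have h: "hyp C1 C2 C3" unfolding hyp_def using assms(4-6) ne by blast
  have "ok C1 C2 C3" using call m assms(4) unfolding list_all_iff Q_def by blast
  with h have o: "case wit C1 C2 C3 of [d1,d2,d3] \<Rightarrow> concl C1 C2 C3 d1 d2 d3 | _ \<Rightarrow> False"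
    unfolding ok_def by blast
  then obtain d1 d2 d3 where w: "wit C1 C2 C3 = [d1,d2,d3]"
    by (auto split: list.splits)
  with o have c: "concl C1 C2 C3 d1 d2 d3" by simp
  have "set [d1,d2,d3] \<subseteq> set L" unfolding w[symmetric] wit_def by auto
  then have mc: "max_comm_class d1" "max_comm_class d2" "max_comm_class d3"
    using L_mcc by (auto simp: list_all_iff)
  show ?thesis
    apply (rule exI[where x=d1], rule exI[where x=d2], rule exI[where x=d3])
    apply (rule conjI[OF mc(1)], rule conjI[OF mc(2)], rule conjI[OF mc(3)])
    by (rule c[unfolded concl_def])
qed

end
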